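(* Let $\{Y_{1\,t}\}_{t\in\mathbb N}$ and $\{Y_{2\,t}\}_{t\in\mathbb N}$ be two real-valued time series with $E(Y_{2\,t}^2)<\infty$ for all $t$, and let $\mathcal F^{(1)}_{t-1}=\sigma(Y_{1\,t-1},Y_{1\,t-2},\ldots)$, $\mathcal F^{(2)}_{t-1}=\sigma(Y_{2\,t-1},Y_{2\,t-2},\ldots)$, $\mathcal F^{(1,2)}_{t-1}=\sigma(\mathcal F^{(1)}_{t-1},\mathcal F^{(2)}_{t-1})$. Consider the three conditions (M) $\Pr\big(E(Y_{2\,t}\mid\mathcal F^{(2)}_{t-1})\neq E(Y_{2\,t}\mid\mathcal F^{(1,2)}_{t-1})\big)>0$ (causality in mean); (V) $\Pr\Big(E\big[(Y_{2\,t}-E(Y_{2\,t}\mid\mathcal F^{(1,2)}_{t-1}))^2\mid\mathcal F^{(2)}_{t-1}\big]\neq E\big[(Y_{2\,t}-E(Y_{2\,t}\mid\mathcal F^{(1,2)}_{t-1}))^2\mid\mathcal F^{(1,2)}_{t-1}\big]\Big)>0$ (causality in variance); (S) $\Pr\Big(E\big[(Y_{2\,t}-E(Y_{2\,t}\mid\mathcal F^{(2)}_{t-1}))^2\mid\mathcal F^{(2)}_{t-1}\big]\neq E\big[(Y_{2\,t}-E(Y_{2\,t}\mid\mathcal F^{(1,2)}_{t-1}))^2\mid\mathcal F^{(1,2)}_{t-1}\big]\Big)>0$. Then (S) holds if at least one of (M) and (V) holds.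
   Context: Condition (V) is the paper's explicit formulation of Granger causality in variance, $\Pr(\mathrm{Var}(Y_{2\,t}\mid\mathcal F^{(2)}_{t-1})\neq \mathrm{Var}(Y_{2\,t}\mid\mathcal F^{(1,2)}_{t-1}))>0$, written with the centering $E(Y_{2\,t}\mid\mathcal F^{(1,2)}_{t-1})$. Condition (S) expresses simultaneous Granger causality in mean and variance from $\{Y_{1\,t}\}$ to $\{Y_{2\,t}\}$. *)

theory Defs
  imports "HOL-Probability.Probability"
begin

text \<open>Sigma algebra on the sample space generated by the past values Y s, s < t,
  of a family of real-valued processes (given as a set of processes).  For t = 0 this is the
  trivial sigma algebra.\<close>
definition past_sigma :: "'a measure \<Rightarrow> (nat \<Rightarrow> 'a \<Rightarrow> real) set \<Rightarrow> nat \<Rightarrow> 'a measure" where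
  "past_sigma M Ys t =
     sigma (space M) (\<Union>Y\<in>Ys. \<Union>s\<in>{..<t}. {Y s -` A \<inter> space M | A. A \<in> sets borel})"

end

theory Submission
  imports Defs
begin

lemma sq_prod_int:
  fixes f g :: "'a \<Rightarrow> real"
  assumes "integrable M (\<lambda>x. (f x)\<^sup>2)" "integrable M (\<lambda>x. (g x)\<^sup>2)"
    "f \<in> borel_measurable M" "g \<in> borel_measurable M"
  shows "integrable M (\<lambda>x. f x * g x)"
proof (rule Bochner_Integration.integrable_bound[of M "\<lambda>x. (f x)\<^sup>2 + (g x)\<^sup>2"])
  show "integrable M (\<lambda>x. (f x)\<^sup>2 + (g x)\<^sup>2)" using assms by auto
  show "(\<lambda>x. f x * g x) \<in> borel_measurable M" using assms by measurable
  show "AE x in M. norm (f x * g x) \<le> norm ((f x)\<^sup>2 + (g x)\<^sup>2)"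
  proof (rule AE_I2)
    fix x
    have "2 * \<bar>f x\<bar> * \<bar>g x\<bar> \<le> \<bar>f x\<bar>\<^sup>2 + \<bar>g x\<bar>\<^sup>2"
      by (rule sum_squares_bound)
    moreover have "0 \<le> \<bar>f x\<bar> * \<bar>g x\<bar>" by simp
    ultimately have "\<bar>f x\<bar> * \<bar>g x\<bar> \<le> (f x)\<^sup>2 + (g x)\<^sup>2"
      unfolding power2_abs by linarith
    then show "norm (f x * g x) \<le> norm ((f x)\<^sup>2 + (g x)\<^sup>2)"
      by (simp add: abs_mult)
  qed
qed

lemma sq_diff_int:
  fixes f g :: "'a \<Rightarrow> real"
  assumes "integrable M (\<lambda>x. (f x)\<^sup>2)" "integrable M (\<lambda>x. (g x)\<^sup>2)"
    "f \<in> borel_measurable M" "g \<in> borel_measurable M"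
  shows "integrable M (\<lambda>x. (f x - g x)\<^sup>2)"
proof -
  have "integrable M (\<lambda>x. (f x)\<^sup>2 - 2 * (f x * g x) + (g x)\<^sup>2)"
    using sq_prod_int[OF assms] assms by auto
  moreover have "(\<lambda>x. (f x)\<^sup>2 - 2 * (f x * g x) + (g x)\<^sup>2) = (\<lambda>x. (f x - g x)\<^sup>2)"
    by (simp add: power2_diff algebra_simps)
  ultimately show ?thesis by simp
qed

lemma main_lemma:
  fixes Y :: "'a \<Rightarrow> real"
  assumes P: "prob_space M" and sG: "subalgebra M G" and sH: "subalgebra M H"
    and GH: "sets G \<subseteq> sets H"
    and Ym[measurable]: "Y \<in> borel_measurable M" and Y2: "integrable M (\<lambda>x. (Y x)\<^sup>2)"
    and ae: "AE x in M. real_cond_exp M G (\<lambda>y. (Y y - real_cond_exp M G Y y)\<^sup>2) x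
                = real_cond_exp M H (\<lambda>y. (Y y - real_cond_exp M H Y y)\<^sup>2) x"
  shows "AE x in M. real_cond_exp M G Y x = real_cond_exp M H Y x"
    and "AE x in M. real_cond_exp M G (\<lambda>y. (Y y - real_cond_exp M H Y y)\<^sup>2) x
                = real_cond_exp M H (\<lambda>y. (Y y - real_cond_exp M H Y y)\<^sup>2) x"
proof -
  interpret prob_space M by (rule P)
  interpret G: sigma_finite_subalgebra M G
    by (rule finite_measure_subalgebra_is_sigma_finite, rule finite_measure_subalgebra.intro)
       (unfold_locales, rule sG)
  interpret H: sigma_finite_subalgebra M H
    by (rule finite_measure_subalgebra_is_sigma_finite, rule finite_measure_subalgebra.intro)
       (unfold_locales, rule sH)
  define m2 where "m2 = real_cond_exp M G Y"
  define m12 where "m12 = real_cond_exp M H Y"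
  have spG: "space G = space M" using sG by (simp add: subalgebra_def)
  have spH: "space H = space M" using sH by (simp add: subalgebra_def)
  have Yi: "integrable M Y" using square_integrable_imp_integrable[OF Ym Y2] .
  have m2G[measurable]: "m2 \<in> borel_measurable G" unfolding m2_def by simp
  have m2H[measurable]: "m2 \<in> borel_measurable H"
    using m2G measurable_mono[of borel borel G H] GH spG spH by auto
  have m12H[measurable]: "m12 \<in> borel_measurable H" unfolding m12_def by simp
  have m2M[measurable]: "m2 \<in> borel_measurable M" unfolding m2_def by simp
  have m12M[measurable]: "m12 \<in> borel_measurable M" unfolding m12_def by simp
  have cvx: "convex_on UNIV (\<lambda>x::real. x ^ 2)" by (rule convex_power_even) simp
  have m2sq: "integrable M (\<lambda>x. (m2 x)\<^sup>2)" unfolding m2_def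
    by (rule G.integrable_convex_cond_exp[where I=UNIV and q="\<lambda>x. x^2"]) (use Yi Y2 cvx in auto)
  have m12sq: "integrable M (\<lambda>x. (m12 x)\<^sup>2)" unfolding m12_def
    by (rule H.integrable_convex_cond_exp[where I=UNIV and q="\<lambda>x. x^2"]) (use Yi Y2 cvx in auto)
  have i1: "integrable M (\<lambda>x. (Y x - m2 x)\<^sup>2)" by (rule sq_diff_int) (use Y2 m2sq in auto)
  have i2: "integrable M (\<lambda>x. (Y x - m12 x)\<^sup>2)" by (rule sq_diff_int) (use Y2 m12sq in auto)
  have i3: "integrable M (\<lambda>x. (m12 x - m2 x)\<^sup>2)" by (rule sq_diff_int) (use m2sq m12sq in auto)
  have Dsq: "integrable M (\<lambda>x. (m12 x - m2 x)\<^sup>2)" by (rule i3)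
  have iDY: "integrable M (\<lambda>x. (m12 x - m2 x) * Y x)" by (rule sq_prod_int) (use Dsq Y2 in auto)
  have iDm: "integrable M (\<lambda>x. (m12 x - m2 x) * m12 x)" by (rule sq_prod_int) (use Dsq m12sq in auto)
  have cross: "(\<integral>x. (m12 x - m2 x) * m12 x \<partial>M) = (\<integral>x. (m12 x - m2 x) * Y x \<partial>M)"
    unfolding m12_def by (rule H.real_cond_exp_intg(2)) (use iDY in \<open>auto simp: m12_def\<close>)
  have e1: "(\<integral>x. real_cond_exp M G (\<lambda>y. (Y y - m2 y)\<^sup>2) x \<partial>M) = (\<integral>x. (Y x - m2 x)\<^sup>2 \<partial>M)"
    by (rule G.real_cond_exp_int(2)[OF i1])
  have e2: "(\<integral>x. real_cond_exp M H (\<lambda>y. (Y y - m12 y)\<^sup>2) x \<partial>M) = (\<integral>x. (Y x - m12 x)\<^sup>2 \<partial>M)"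
    by (rule H.real_cond_exp_int(2)[OF i2])
  have e3: "(\<integral>x. real_cond_exp M G (\<lambda>y. (Y y - m2 y)\<^sup>2) x \<partial>M)
      = (\<integral>x. real_cond_exp M H (\<lambda>y. (Y y - m12 y)\<^sup>2) x \<partial>M)"
    by (rule integral_cong_AE) (use ae in \<open>auto simp: m2_def m12_def\<close>)
  have eq: "(\<integral>x. (Y x - m2 x)\<^sup>2 \<partial>M) = (\<integral>x. (Y x - m12 x)\<^sup>2 \<partial>M)"
    using e1 e2 e3 by simp
  have pt: "(\<lambda>x. (Y x - m2 x)\<^sup>2) = (\<lambda>x. ((Y x - m12 x)\<^sup>2 + (m12 x - m2 x)\<^sup>2)
      + 2 * ((m12 x - m2 x) * Y x - (m12 x - m2 x) * m12 x))"
    by (rule ext) (simp add: power2_eq_square algebra_simps)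
  have "(\<integral>x. (Y x - m2 x)\<^sup>2 \<partial>M) = (\<integral>x. (Y x - m12 x)\<^sup>2 \<partial>M) + (\<integral>x. (m12 x - m2 x)\<^sup>2 \<partial>M)
      + 2 * ((\<integral>x. (m12 x - m2 x) * Y x \<partial>M) - (\<integral>x. (m12 x - m2 x) * m12 x \<partial>M))"
    unfolding pt using i2 i3 iDY iDm by simp
  then have "(\<integral>x. (m12 x - m2 x)\<^sup>2 \<partial>M) = 0" using eq cross by simp
  then have "AE x in M. (m12 x - m2 x)\<^sup>2 = 0"
    using integral_nonneg_eq_0_iff_AE[OF i3] by simp
  then have D0: "AE x in M. m2 x = m12 x" by eventually_elim simp
  then show "AE x in M. real_cond_exp M G Y x = real_cond_exp M H Y x" by (simp add: m2_def m12_def)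
  have "AE x in M. real_cond_exp M G (\<lambda>y. (Y y - m12 y)\<^sup>2) x = real_cond_exp M G (\<lambda>y. (Y y - m2 y)\<^sup>2) x"
    by (rule G.real_cond_exp_cong) (use D0 in auto)
  with ae show "AE x in M. real_cond_exp M G (\<lambda>y. (Y y - real_cond_exp M H Y y)\<^sup>2) x
                = real_cond_exp M H (\<lambda>y. (Y y - real_cond_exp M H Y y)\<^sup>2) x"
    by eventually_elim (simp add: m2_def m12_def)
qed


lemma past_sigma_subalg:
  assumes "\<And>Y s. Y \<in> Ys \<Longrightarrow> Y s \<in> borel_measurable M"
  shows "subalgebra M (past_sigma M Ys t)"
proof -
  let ?A = "(\<Union>Y\<in>Ys. \<Union>s\<in>{..<t}. {Y s -` A \<inter> space M | A. A \<in> sets borel})"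
  have A: "?A \<subseteq> sets M" using assms by (auto intro: measurable_sets)
  then have "?A \<subseteq> Pow (space M)" using sets.space_closed by blast
  then have "sets (past_sigma M Ys t) = sigma_sets (space M) ?A" "space (past_sigma M Ys t) = space M"
    unfolding past_sigma_def by (simp_all only: sets_measure_of space_measure_of_conv)
  moreover have "sigma_sets (space M) ?A \<subseteq> sets M" using A by (rule sets.sigma_sets_subset)
  ultimately show ?thesis unfolding subalgebra_def by simp
qed

lemma past_sigma_mono:
  assumes "\<And>Y s. Y \<in> Ys' \<Longrightarrow> Y s \<in> borel_measurable M" "Ys \<subseteq> Ys'"
  shows "sets (past_sigma M Ys t) \<subseteq> sets (past_sigma M Ys' t)"
proof -
  let ?A = "\<lambda>Ys. (\<Union>Y\<in>Ys. \<Union>s\<in>{..<t}. {Y s -` A \<inter> space M | A. A \<in> sets borel})"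
  have "?A Ys' \<subseteq> Pow (space M)" by blast
  moreover have "?A Ys \<subseteq> Pow (space M)" by blast
  moreover have "?A Ys \<subseteq> ?A Ys'" using assms(2) by blast
  ultimately show ?thesis unfolding past_sigma_def
    by (simp only: sets_measure_of) (rule sigma_sets_mono'; blast)
qed

theorem proposition1:
  fixes M :: "'a measure" and Y1 Y2 :: "nat \<Rightarrow> 'a \<Rightarrow> real" and t :: nat
  assumes "prob_space M"
    and "\<And>s. Y1 s \<in> borel_measurable M"
    and "\<And>s. Y2 s \<in> borel_measurable M"
    and "\<And>s. integrable M (\<lambda>x. (Y2 s x)\<^sup>2)"
  defines "F2 \<equiv> past_sigma M {Y2} t"
    and "F12 \<equiv> past_sigma M {Y1, Y2} t"
  defines "CM \<equiv> prob_space.prob M {x \<in> space M.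
                  real_cond_exp M F2 (Y2 t) x \<noteq> real_cond_exp M F12 (Y2 t) x} > 0"
    and "CV \<equiv> prob_space.prob M {x \<in> space M.
                  real_cond_exp M F2 (\<lambda>y. (Y2 t y - real_cond_exp M F12 (Y2 t) y)\<^sup>2) x
                  \<noteq> real_cond_exp M F12 (\<lambda>y. (Y2 t y - real_cond_exp M F12 (Y2 t) y)\<^sup>2) x} > 0"
    and "CS \<equiv> prob_space.prob M {x \<in> space M.
                  real_cond_exp M F2 (\<lambda>y. (Y2 t y - real_cond_exp M F2 (Y2 t) y)\<^sup>2) x
                  \<noteq> real_cond_exp M F12 (\<lambda>y. (Y2 t y - real_cond_exp M F12 (Y2 t) y)\<^sup>2) x} > 0"
  shows "CM \<or> CV \<Longrightarrow> CS"
proof -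
  interpret prob_space M by (rule assms(1))
  have sG: "subalgebra M F2" unfolding F2_def by (rule past_sigma_subalg) (use assms(3) in auto)
  have sH: "subalgebra M F12" unfolding F12_def by (rule past_sigma_subalg) (use assms(2,3) in auto)
  have GH: "sets F2 \<subseteq> sets F12" unfolding F2_def F12_def
    by (rule past_sigma_mono) (use assms(2,3) in auto)
  have sGM: "sets F2 \<subseteq> sets M" using sG by (simp add: subalgebra_def)
  have sHM: "sets F12 \<subseteq> sets M" using sH by (simp add: subalgebra_def)
  have meas: "{x \<in> space M. f x \<noteq> g x} \<in> sets M"
    if "f \<in> borel_measurable M" "g \<in> borel_measurable M" for f g :: "'a \<Rightarrow> real"
    using that by measurable
  have toAE: "AE x in M. f x = g x" if "\<not> prob {x \<in> space M. f x \<noteq> g x} > 0"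
    "f \<in> borel_measurable M" "g \<in> borel_measurable M" for f g :: "'a \<Rightarrow> real"
  proof -
    have "prob {x \<in> space M. f x \<noteq> g x} = 0" using that(1) measure_nonneg[of M] by (meson not_less order_antisym)
    then have "emeasure M {x \<in> space M. f x \<noteq> g x} = 0"
      using meas[OF that(2,3)] by (simp add: emeasure_eq_measure)
    then show ?thesis using AE_iff_measurable[OF meas[OF that(2,3)]] by auto
  qed
  have fromAE: "\<not> prob {x \<in> space M. f x \<noteq> g x} > 0" if "AE x in M. f x = g x"
    "f \<in> borel_measurable M" "g \<in> borel_measurable M" for f g :: "'a \<Rightarrow> real"
  proof -
    have "emeasure M {x \<in> space M. f x \<noteq> g x} = 0"
      using AE_iff_measurable[OF meas[OF that(2,3)]] that(1) by auto
    then have "prob {x \<in> space M. f x \<noteq> g x} = 0"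
      by (simp add: measure_def)
    then show ?thesis by simp
  qed
  assume h: "CM \<or> CV"
  show CS
  proof (rule ccontr)
    assume "\<not> CS"
    then have ae: "AE x in M. real_cond_exp M F2 (\<lambda>y. (Y2 t y - real_cond_exp M F2 (Y2 t) y)\<^sup>2) x
                = real_cond_exp M F12 (\<lambda>y. (Y2 t y - real_cond_exp M F12 (Y2 t) y)\<^sup>2) x"
      unfolding CS_def by (intro toAE) (simp_all add: borel_measurable_cond_exp2)
    note r = main_lemma[OF assms(1) sG sH GH assms(3)[of t] assms(4)[of t] ae]
    have "\<not> CM" unfolding CM_def by (rule fromAE[OF r(1)]) (simp_all add: borel_measurable_cond_exp2)
    moreover have "\<not> CV" unfolding CV_def by (rule fromAE[OF r(2)]) (simp_all add: borel_measurable_cond_exp2)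
    ultimately show False using h by blast
  qed
qed

end
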